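(* Let $\mathbf{f}=\{f_1,\dots,f_m\}$ be an $m$-objective problem ($m\ge2$, not necessarily simple) whose Pareto front $\mathbf{f}X^*(\mathbf{f})$ is a topological $(m-1)$-manifold (possibly with boundary). Let $y\in\operatorname{Int}\mathbf{f}X^*(\mathbf{f})$. Then for every neighborhood $U\subseteq\mathbf{f}X^*(\mathbf{f})$ of $y$ and every $\mathbf{g}$ with $\emptyset\subsetneq\mathbf{g}\subsetneq\mathbf{f}$, there exists a point $v\in U$ such that $v$ $\mathbf{g}$-dominates $y$ and $y$ $(\mathbf{f}\setminus\mathbf{g})$-dominates $v$.
   Context: A problem is a finite set $\mathbf{f}=\{f_1,\dots,f_m\}$ of functions $f_i:\mathbb{R}^n\to\mathbb{R}$ together with a feasible region $X\subseteq\mathbb{R}^n$, to be minimized simultaneously; its evaluation map is $x\mapsto(f_1(x),\dots,f_m(x))$. The Pareto set $X^*(\mathbf{f})$ is the set of $x^*\in X$ for which there is no $x\in X$ with $f_i(x)\le f_i(x^* )$ for all $i$ and $f_j(x)<f_j(x^* )$ for some $j$; the Pareto front $\mathbf{f}X^*(\mathbf{f})\subseteq\mathbb{R}^m$ is its image, with the subspace topology. For points $u,v\in\mathbb{R}^m$ and a subset $\mathbf{g}\subseteq\mathbf{f}$, $u$ $\mathbf{g}$-dominates $v$ if $u_i\le v_i$ for all $i$ with $f_i\in\mathbf{g}$ and $u_j<v_j$ for some $j$ with $f_j\in\mathbf{g}$. For a topological manifold with boundary $M$, $\operatorname{Int}M$ denotes its manifold interior. *)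

theory Defs
  imports "HOL-Analysis.Analysis"
begin

definition evalmap :: "('m::finite \<Rightarrow> real^'n \<Rightarrow> real) \<Rightarrow> real^'n \<Rightarrow> real^'m" where
  "evalmap f x = (\<chi> i. f i x)"

definition dominates_on :: "'m set \<Rightarrow> real^'m \<Rightarrow> real^'m \<Rightarrow> bool" where
  "dominates_on G u v \<longleftrightarrow> (\<forall>i\<in>G. u $ i \<le> v $ i) \<and> (\<exists>j\<in>G. u $ j < v $ j)"

definition pareto_set :: "('m::finite \<Rightarrow> real^'n \<Rightarrow> real) \<Rightarrow> (real^'n) set \<Rightarrow> (real^'n) set" where
  "pareto_set f X = {xs \<in> X. \<not> (\<exists>x\<in>X. (\<forall>i. f i x \<le> f i xs) \<and> (\<exists>j. f j x < f j xs))}"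

definition pareto_front :: "('m::finite \<Rightarrow> real^'n \<Rightarrow> real) \<Rightarrow> (real^'n) set \<Rightarrow> (real^'m) set" where
  "pareto_front f X = evalmap f ` pareto_set f X"

text \<open>S (with the subspace topology) is a topological manifold with boundary of dimension
  CARD('k): every point has an open neighbourhood in S homeomorphic to a relatively open
  subset of a closed half-space of real^'k. (Hausdorff and second countability are
  automatic for subspaces of real^'m.)\<close>
definition top_manifold_bdry :: "'k::finite itself \<Rightarrow> (real^'m) set \<Rightarrow> bool" where
  "top_manifold_bdry _ S \<longleftrightarrow>
     (\<forall>p\<in>S. \<exists>U (V :: (real^'k) set) c. openin (top_of_set S) U \<and> p \<in> U \<and>
        openin (top_of_set {x. 0 \<le> x $ c}) V \<and> U homeomorphic V)"

definition manifold_interior :: "'k::finite itself \<Rightarrow> (real^'m) set \<Rightarrow> (real^'m) set" where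
  "manifold_interior _ S = {p \<in> S. \<exists>U (V :: (real^'k) set). openin (top_of_set S) U \<and> p \<in> U \<and>
        open V \<and> U homeomorphic V}"

end

theory Submission
  imports Defs
begin

lemma pf_antichain:
  assumes a: "a \<in> pareto_front f X" and b: "b \<in> pareto_front f X"
    and le: "\<forall>i. a $ i \<le> b $ i"
  shows "a = b"
proof -
  obtain xa where xa: "xa \<in> pareto_set f X" "a = evalmap f xa" using a unfolding pareto_front_def by auto
  obtain xb where xb: "xb \<in> pareto_set f X" "b = evalmap f xb" using b unfolding pareto_front_def by auto
  have "xa \<in> X" using xa(1) unfolding pareto_set_def by auto
  hence "\<not> (\<exists>j. f j xa < f j xb)" using xb(1) le unfolding pareto_set_def xa(2) xb(2) evalmap_def by auto
  thus ?thesis using le unfolding xa(2) xb(2) evalmap_def vec_eq_iff by (auto simp: order.order_iff_strict)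
qed

theorem lemma2:
  fixes f :: "'m::finite \<Rightarrow> real^'n \<Rightarrow> real"
    and X :: "(real^'n) set"
    and y :: "real^'m"
  assumes m2: "CARD('m) \<ge> 2"
    and dim: "CARD('k::finite) + 1 = CARD('m)"
    and mfd: "top_manifold_bdry TYPE('k) (pareto_front f X)"
    and y: "y \<in> manifold_interior TYPE('k) (pareto_front f X)"
  shows "\<forall>U G. U \<subseteq> pareto_front f X \<and>
            (\<exists>W. openin (top_of_set (pareto_front f X)) W \<and> y \<in> W \<and> W \<subseteq> U) \<and>
            {} \<subset> G \<and> G \<subset> (UNIV :: 'm set) \<longrightarrow>
            (\<exists>v\<in>U. dominates_on G v y \<and> dominates_on (UNIV - G) y v)"
proof (intro allI impI)
  fix U and G :: "'m set"
  assume H: "U \<subseteq> pareto_front f X \<and>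
            (\<exists>W. openin (top_of_set (pareto_front f X)) W \<and> y \<in> W \<and> W \<subseteq> U) \<and>
            {} \<subset> G \<and> G \<subset> (UNIV :: 'm set)"
  define P where "P = pareto_front f X"
  obtain W where W: "openin (top_of_set P) W" "y \<in> W" "W \<subseteq> U" using H P_def by auto
  obtain i0 where i0: "i0 \<in> G" using H by auto
  obtain i1 where i1: "i1 \<notin> G" using H by auto
  have yP: "y \<in> P" using y unfolding manifold_interior_def P_def by auto
  obtain U0 and V :: "(real^'k) set" where UV: "openin (top_of_set P) U0" "y \<in> U0" "open V"
    "U0 homeomorphic V"
    using y unfolding manifold_interior_def P_def by auto
  obtain k g where hom: "homeomorphism U0 V k g" using UV(4) unfolding homeomorphic_def by auto
  have U0P: "U0 \<subseteq> P" using UV(1) by (meson openin_imp_subset)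
  have "card (UNIV - {i0}) = CARD('k)" using dim by (simp add: card_Diff_singleton)
  then obtain e :: "'k \<Rightarrow> 'm" where e: "bij_betw e UNIV (UNIV - {i0})"
    using finite_same_card_bij[of "UNIV::'k set" "UNIV - {i0}"] by auto
  define \<psi> :: "real^'m \<Rightarrow> real^'k" where "\<psi> = (\<lambda>x. \<chi> j. x $ (e j) - x $ i0)"
  have surj_e: "\<And>i. i \<noteq> i0 \<Longrightarrow> \<exists>j. i = e j" using e unfolding bij_betw_def by auto
  have psi_eq: "(\<forall>j. (a - b) $ e j = (a - b) $ i0 + (\<psi> a - \<psi> b) $ j)" for a b
    unfolding \<psi>_def by auto
  have inj\<psi>: "inj_on \<psi> P"
  proof (rule inj_onI)
    fix a b assume a: "a \<in> P" and b: "b \<in> P" and eq: "\<psi> a = \<psi> b"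
    define c where "c = a $ i0 - b $ i0"
    have D: "a $ i - b $ i = c" for i
    proof (cases "i = i0")
      case False then obtain j where "i = e j" using surj_e by auto
      thus ?thesis using psi_eq[of a b] eq c_def by auto
    qed (simp add: c_def)
    show "a = b"
    proof (cases "c \<ge> 0")
      case True
      hence "\<forall>i. b $ i \<le> a $ i" using D by (smt (verit))
      thus ?thesis using pf_antichain[of b f X a] a b P_def by auto
    next
      case False
      hence "\<forall>i. a $ i \<le> b $ i" using D by (smt (verit))
      thus ?thesis using pf_antichain[of a f X b] a b P_def by auto
    qed
  qed
  have cont\<psi>: "continuous_on A \<psi>" for A
    unfolding \<psi>_def by (intro continuous_intros)
  define S where "S = V \<inter> g -` W"
  have gcont: "continuous_on V g" using homeomorphism_cont2[OF hom] .
  have gV: "g ` V = U0" using homeomorphism_image2[OF hom] .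
  have "openin (top_of_set V) (V \<inter> g -` W)"
    using continuous_openin_preimage[OF gcont _ W(1)] gV U0P by auto
  hence Sopen: "open S" using UV(3) S_def openin_open_trans by blast
  have kyV: "k y \<in> V" using homeomorphism_image1[OF hom] UV(2) by blast
  have ky2: "g (k y) = y" using homeomorphism_apply1[OF hom UV(2)] .
  have ky: "k y \<in> S" "g (k y) = y" using kyV ky2 W(2) unfolding S_def by auto
  have injg: "inj_on g V" using homeomorphism_apply2[OF hom] by (metis inj_on_def)
  have injF: "inj_on (\<psi> \<circ> g) S"
  proof (rule inj_onI)
    fix a b assume "a \<in> S" "b \<in> S" "(\<psi> \<circ> g) a = (\<psi> \<circ> g) b"
    hence ab: "a \<in> V" "b \<in> V" "\<psi> (g a) = \<psi> (g b)" unfolding S_def by auto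
    hence "g a \<in> P" "g b \<in> P" using gV U0P by auto
    hence "g a = g b" using inj_onD[OF inj\<psi>] ab(3) by blast
    thus "a = b" using inj_onD[OF injg] ab by blast
  qed
  have "S \<subseteq> V" unfolding S_def by auto
  hence "continuous_on S (\<psi> \<circ> g)"
    using continuous_on_compose continuous_on_subset[OF gcont] cont\<psi> by blast
  hence Fopen: "open ((\<psi> \<circ> g) ` S)" using invariance_of_domain Sopen injF by blast
  have "\<psi> y \<in> (\<psi> \<circ> g) ` S" using ky by force
  then obtain \<epsilon> where \<epsilon>: "\<epsilon> > 0" "\<And>z. dist z (\<psi> y) < \<epsilon> \<Longrightarrow> z \<in> (\<psi> \<circ> g) ` S"
    using Fopen unfolding open_dist by metis
  define d1 :: "real^'k" where "d1 = (\<chi> j. if e j \<in> G then 0 else 1)"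
  define t where "t = \<epsilon> / (norm d1 + 1)"
  have n1: "norm d1 + 1 > 0" by (simp add: add_nonneg_pos)
  have tpos: "t > 0" using \<epsilon> n1 unfolding t_def by simp
  have "t * norm d1 < \<epsilon>"
  proof -
    have "t * norm d1 < t * (norm d1 + 1)" using tpos by simp
    also have "\<dots> = \<epsilon>" unfolding t_def using n1 by simp
    finally show ?thesis .
  qed
  hence "dist (\<psi> y + t *\<^sub>R d1) (\<psi> y) < \<epsilon>" using tpos by (simp add: dist_norm)
  then obtain z where z: "z \<in> S" "\<psi> (g z) = \<psi> y + t *\<^sub>R d1" using \<epsilon>(2) by force
  define v where "v = g z"
  have vW: "v \<in> W" using z(1) unfolding S_def v_def by auto
  have vP: "v \<in> P" using z(1) gV U0P unfolding S_def v_def by auto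
  define D where "D = v $ i0 - y $ i0"
  have DG: "i \<in> G \<Longrightarrow> v $ i - y $ i = D" for i
  proof (cases "i = i0")
    case False then obtain j where j: "i = e j" using surj_e by auto
    have "(v - y) $ e j = (v - y) $ i0 + (\<psi> v - \<psi> y) $ j" using psi_eq by blast
    moreover assume "i \<in> G"
    ultimately show ?thesis using z(2) j unfolding v_def D_def d1_def by auto
  qed (simp add: D_def)
  have DnG: "i \<notin> G \<Longrightarrow> v $ i - y $ i = D + t" for i
  proof -
    assume iG: "i \<notin> G"
    hence "i \<noteq> i0" using i0 by auto
    then obtain j where j: "i = e j" using surj_e by auto
    have "(v - y) $ e j = (v - y) $ i0 + (\<psi> v - \<psi> y) $ j" using psi_eq by blast
    thus ?thesis using z(2) j iG unfolding v_def D_def d1_def by auto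
  qed
  have Dneg: "D < 0"
  proof (rule ccontr)
    assume "\<not> D < 0"
    hence "\<forall>i. y $ i \<le> v $ i" using DG DnG tpos by (smt (verit))
    hence "y = v" using pf_antichain[of y f X v] yP vP P_def by auto
    thus False using DnG[OF i1] tpos \<open>\<not> D < 0\<close> by simp
  qed
  have Dt: "D + t > 0"
  proof (rule ccontr)
    assume "\<not> D + t > 0"
    hence "\<forall>i. v $ i \<le> y $ i" using DG DnG tpos by (smt (verit))
    hence "v = y" using pf_antichain[of v f X y] yP vP P_def by auto
    thus False using DG[OF i0] Dneg by simp
  qed
  show "\<exists>v\<in>U. dominates_on G v y \<and> dominates_on (UNIV - G) y v"
  proof (intro bexI conjI)
    show "v \<in> U" using vW W(3) by auto
    show "dominates_on G v y" unfolding dominates_on_def using DG Dneg i0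
      by (smt (verit))
    show "dominates_on (UNIV - G) y v" unfolding dominates_on_def using DnG Dt i1
      by (smt (verit) Diff_iff UNIV_I)
  qed
qed

end
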